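(* Let $T=(p,q:F\to E)$ be a textile system in which $F$ is source-free, $q|_{F^0}:F^0\to E^0$ is onto, and $q$ has $r$-path lifting. Then $\mathsf X^+_T$ is nonempty.
   Context: Directed graph $F=(F^0,F^1,r,s)$; source-free means $r:F^1\to F^0$ is onto. Textile system $T=(p,q:F\to E)$: graph homomorphisms $p,q$ (commuting with $r,s$) with $f\mapsto(r(f),p(f),s(f),q(f))$ injective on $F^1$. $q$ has $r$-path lifting if for all $v\in F^0$, $e\in E^1$ with $q(v)=r(e)$ there exists (not necessarily unique) $f\in F^1$ with $q(f)=e$ and $r(f)=v$. $\mathsf X^+_T=\{x:\mathbb N^2\to F^1: s(x_n)=r(x_{n+\varepsilon_1}),\ p(x_n)=q(x_{n+\varepsilon_2})\ \forall n\in\mathbb N^2\}$, $\mathbb N=\{0,1,\dots\}$. *)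

theory Defs
  imports Main
begin

record ('v, 'e) dgraph =
  verts :: "'v set"
  edges :: "'e set"
  rng :: "'e \<Rightarrow> 'v"
  src :: "'e \<Rightarrow> 'v"

definition is_dgraph :: "('v, 'e) dgraph \<Rightarrow> bool" where
  "is_dgraph G \<longleftrightarrow> (\<forall>e\<in>edges G. rng G e \<in> verts G \<and> src G e \<in> verts G)"

definition graph_hom ::
  "('v, 'e) dgraph \<Rightarrow> ('w, 'f) dgraph \<Rightarrow> ('v \<Rightarrow> 'w) \<Rightarrow> ('e \<Rightarrow> 'f) \<Rightarrow> bool" where
  "graph_hom G H h0 h1 \<longleftrightarrow>
     (\<forall>v\<in>verts G. h0 v \<in> verts H) \<and>
     (\<forall>e\<in>edges G. h1 e \<in> edges H \<and>
        rng H (h1 e) = h0 (rng G e) \<and> src H (h1 e) = h0 (src G e))"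

definition textile_system ::
  "('v, 'e) dgraph \<Rightarrow> ('w, 'f) dgraph \<Rightarrow> ('v \<Rightarrow> 'w) \<Rightarrow> ('e \<Rightarrow> 'f)
     \<Rightarrow> ('v \<Rightarrow> 'w) \<Rightarrow> ('e \<Rightarrow> 'f) \<Rightarrow> bool" where
  "textile_system F E p0 p1 q0 q1 \<longleftrightarrow>
     is_dgraph F \<and> is_dgraph E \<and> graph_hom F E p0 p1 \<and> graph_hom F E q0 q1 \<and>
     inj_on (\<lambda>f. (rng F f, p1 f, src F f, q1 f)) (edges F)"

definition source_free :: "('v, 'e) dgraph \<Rightarrow> bool" where
  "source_free F \<longleftrightarrow> rng F ` edges F = verts F"

definition r_path_lifting ::
  "('v, 'e) dgraph \<Rightarrow> ('w, 'f) dgraph \<Rightarrow> ('v \<Rightarrow> 'w) \<Rightarrow> ('e \<Rightarrow> 'f) \<Rightarrow> bool" where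
  "r_path_lifting F E q0 q1 \<longleftrightarrow>
     (\<forall>v\<in>verts F. \<forall>e\<in>edges E. q0 v = rng E e \<longrightarrow>
        (\<exists>f\<in>edges F. q1 f = e \<and> rng F f = v))"

definition X_plus ::
  "('v, 'e) dgraph \<Rightarrow> ('e \<Rightarrow> 'f) \<Rightarrow> ('e \<Rightarrow> 'f) \<Rightarrow> (nat \<times> nat \<Rightarrow> 'e) set" where
  "X_plus F p1 q1 = {x. (\<forall>n. x n \<in> edges F) \<and>
     (\<forall>i j. src F (x (i, j)) = rng F (x (Suc i, j)) \<and>
            p1 (x (i, j)) = q1 (x (i, Suc j)))}"

end

theory Submission
  imports Defs
begin

definition liftE :: "('v, 'e) dgraph \<Rightarrow> ('e \<Rightarrow> 'f) \<Rightarrow> 'v \<Rightarrow> 'f \<Rightarrow> 'e" where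
  "liftE F q1 v e = (SOME f. f \<in> edges F \<and> q1 f = e \<and> rng F f = v)"

primrec nrow :: "('v, 'e) dgraph \<Rightarrow> ('w, 'f) dgraph \<Rightarrow> ('v \<Rightarrow> 'w) \<Rightarrow> ('e \<Rightarrow> 'f) \<Rightarrow> ('e \<Rightarrow> 'f)
   \<Rightarrow> (nat \<Rightarrow> 'e) \<Rightarrow> nat \<Rightarrow> 'e" where
  "nrow F E q0 q1 p1 R 0 = liftE F q1 (SOME v. v \<in> verts F \<and> q0 v = rng E (p1 (R 0))) (p1 (R 0))"
| "nrow F E q0 q1 p1 R (Suc i) = liftE F q1 (src F (nrow F E q0 q1 p1 R i)) (p1 (R (Suc i)))"

primrec row0 :: "('v, 'e) dgraph \<Rightarrow> nat \<Rightarrow> 'e" where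
  "row0 F 0 = (SOME f. f \<in> edges F)"
| "row0 F (Suc i) = (SOME f. f \<in> edges F \<and> rng F f = src F (row0 F i))"

definition validR :: "('v, 'e) dgraph \<Rightarrow> (nat \<Rightarrow> 'e) \<Rightarrow> bool" where
  "validR F R \<longleftrightarrow> (\<forall>i. R i \<in> edges F \<and> src F (R i) = rng F (R (Suc i)))"

lemma liftE_ok:
  assumes "r_path_lifting F E q0 q1" "v \<in> verts F" "e \<in> edges E" "q0 v = rng E e"
  shows "liftE F q1 v e \<in> edges F \<and> q1 (liftE F q1 v e) = e \<and> rng F (liftE F q1 v e) = v"
proof -
  from assms obtain f where "f \<in> edges F \<and> q1 f = e \<and> rng F f = v"
    unfolding r_path_lifting_def by blast
  thus ?thesis unfolding liftE_def by (rule someI)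
qed

lemma nrow_ok:
  assumes T: "textile_system F E p0 p1 q0 q1"
    and sur: "q0 ` verts F = verts E"
    and rl: "r_path_lifting F E q0 q1"
    and V: "validR F R"
  shows "nrow F E q0 q1 p1 R i \<in> edges F \<and> q1 (nrow F E q0 q1 p1 R i) = p1 (R i)"
proof (induction i)
  case 0
  have gp: "graph_hom F E p0 p1" and gq: "graph_hom F E q0 q1" and dE: "is_dgraph E"
    using T unfolding textile_system_def by auto
  have R0: "R 0 \<in> edges F" using V unfolding validR_def by auto
  hence pe: "p1 (R 0) \<in> edges E" using gp unfolding graph_hom_def by auto
  hence "rng E (p1 (R 0)) \<in> verts E" using dE unfolding is_dgraph_def by auto
  then obtain v where "v \<in> verts F" "q0 v = rng E (p1 (R 0))" using sur by force
  hence sv: "(SOME v. v \<in> verts F \<and> q0 v = rng E (p1 (R 0))) \<in> verts F \<and>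
     q0 (SOME v. v \<in> verts F \<and> q0 v = rng E (p1 (R 0))) = rng E (p1 (R 0))"
    by (intro someI) auto
  show ?case using liftE_ok[OF rl _ pe] sv by simp
next
  case (Suc i)
  have gp: "graph_hom F E p0 p1" and gq: "graph_hom F E q0 q1" and dF: "is_dgraph F"
    using T unfolding textile_system_def by auto
  let ?y = "nrow F E q0 q1 p1 R i"
  have Ri: "R i \<in> edges F" "src F (R i) = rng F (R (Suc i))" "R (Suc i) \<in> edges F"
    using V unfolding validR_def by auto
  have pe: "p1 (R (Suc i)) \<in> edges E" using gp Ri unfolding graph_hom_def by auto
  have sv: "src F ?y \<in> verts F" using dF Suc unfolding is_dgraph_def by auto
  have "q0 (src F ?y) = src E (q1 ?y)" using gq Suc unfolding graph_hom_def by auto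
  also have "\<dots> = src E (p1 (R i))" using Suc by simp
  also have "\<dots> = p0 (src F (R i))" using gp Ri unfolding graph_hom_def by auto
  also have "\<dots> = rng E (p1 (R (Suc i)))" using gp Ri unfolding graph_hom_def by auto
  finally show ?case using liftE_ok[OF rl sv pe] by simp
qed

lemma nrow_valid:
  assumes T: "textile_system F E p0 p1 q0 q1"
    and sur: "q0 ` verts F = verts E"
    and rl: "r_path_lifting F E q0 q1"
    and V: "validR F R"
  shows "validR F (nrow F E q0 q1 p1 R)"
  unfolding validR_def
proof
  fix i
  have dE: "is_dgraph E" "graph_hom F E p0 p1"
    using T unfolding textile_system_def by auto
  let ?y = "nrow F E q0 q1 p1 R i"
  have Ri: "R i \<in> edges F" "src F (R i) = rng F (R (Suc i))" "R (Suc i) \<in> edges F"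
    using V unfolding validR_def by auto
  have a: "?y \<in> edges F" using nrow_ok[OF assms] by blast
  have pe: "p1 (R (Suc i)) \<in> edges E" using dE Ri unfolding graph_hom_def by auto
  have "rng F (nrow F E q0 q1 p1 R (Suc i)) = src F ?y"
  proof -
    have sv: "src F ?y \<in> verts F" using T a unfolding textile_system_def is_dgraph_def by auto
    have "q0 (src F ?y) = rng E (p1 (R (Suc i)))"
    proof -
      have gq: "graph_hom F E q0 q1" using T unfolding textile_system_def by auto
      have "q0 (src F ?y) = src E (q1 ?y)" using gq a unfolding graph_hom_def by auto
      also have "\<dots> = src E (p1 (R i))" using nrow_ok[OF assms] by simp
      also have "\<dots> = p0 (src F (R i))" using dE Ri unfolding graph_hom_def by auto
      also have "\<dots> = rng E (p1 (R (Suc i)))" using dE Ri unfolding graph_hom_def by auto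
      finally show ?thesis .
    qed
    thus ?thesis using liftE_ok[OF rl sv pe] by simp
  qed
  thus "?y \<in> edges F \<and> src F ?y = rng F (nrow F E q0 q1 p1 R (Suc i))" using a by simp
qed

lemma row0_valid:
  assumes "is_dgraph F" "source_free F" "verts F \<noteq> {}"
  shows "validR F (row0 F)"
proof -
  have A: "row0 F i \<in> edges F" for i
  proof (induction i)
    case 0
    from assms have "edges F \<noteq> {}" unfolding source_free_def by auto
    then show ?case by (simp add: some_in_eq)
  next
    case (Suc i)
    have "src F (row0 F i) \<in> verts F" using Suc assms(1) unfolding is_dgraph_def by auto
    then obtain f where "f \<in> edges F" "rng F f = src F (row0 F i)"
      using assms(2) unfolding source_free_def by force
    hence "\<exists>f. f \<in> edges F \<and> rng F f = src F (row0 F i)" by blast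
    from someI_ex[OF this] show ?case by simp
  qed
  have "src F (row0 F i) = rng F (row0 F (Suc i))" for i
  proof -
    have "src F (row0 F i) \<in> verts F" using A assms(1) unfolding is_dgraph_def by auto
    then obtain f where "f \<in> edges F" "rng F f = src F (row0 F i)"
      using assms(2) unfolding source_free_def by force
    hence "\<exists>f. f \<in> edges F \<and> rng F f = src F (row0 F i)" by blast
    from someI_ex[OF this] show ?thesis by simp
  qed
  with A show ?thesis unfolding validR_def by auto
qed

theorem theorem3p6:
  fixes F :: "('v, 'e) dgraph" and E :: "('w, 'f) dgraph"
    and p0 q0 :: "'v \<Rightarrow> 'w" and p1 q1 :: "'e \<Rightarrow> 'f"
  assumes "textile_system F E p0 p1 q0 q1"
    and "source_free F"
    and "q0 ` verts F = verts E"
    and "r_path_lifting F E q0 q1"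
    and "verts F \<noteq> {}"
  shows "X_plus F p1 q1 \<noteq> {}"
proof -
  let ?N = "nrow F E q0 q1 p1"
  define rows where "rows j = (?N ^^ j) (row0 F)" for j
  have V: "validR F (rows j)" for j
  proof (induction j)
    case 0
    have "is_dgraph F" using assms(1) unfolding textile_system_def by auto
    then show ?case using row0_valid assms unfolding rows_def by auto
  next
    case (Suc j)
    then show ?case using nrow_valid[OF assms(1) assms(3) assms(4)] unfolding rows_def by simp
  qed
  define x where "x n = rows (snd n) (fst n)" for n
  have "x \<in> X_plus F p1 q1"
    unfolding X_plus_def
  proof (intro CollectI conjI allI)
    fix n show "x n \<in> edges F" using V unfolding x_def validR_def by auto
  next
    fix i j show "src F (x (i, j)) = rng F (x (Suc i, j))" using V unfolding x_def validR_def by auto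
  next
    fix i j
    have "rows (Suc j) = ?N (rows j)" unfolding rows_def by simp
    then show "p1 (x (i, j)) = q1 (x (i, Suc j))"
      using nrow_ok[OF assms(1) assms(3) assms(4) V[of j]] unfolding x_def by simp
  qed
  thus ?thesis by blast
qed

end
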